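(* Let $V$ be a real Hilbert space, $\mathcal D$ a dictionary, $V_n\subset V$ any subspace of dimension $n$ with orthonormal basis $(\phi_1,\dots,\phi_n)$, and $\kappa\in(0,1)$. If $(W_m)_{m\ge0}$ is generated by the worst case OMP algorithm with parameter $\kappa$, then $\lim_{m\to\infty}r_m=0$.
   Context: A dictionary is a set $\mathcal D\subset V$ of elements with $\|\omega\|=1$ for all $\omega\in\mathcal D$ whose finite linear combinations are dense in $V$. Worst case OMP: $W_0=\{0\}$; for $k\ge1$, take $v_k\in\operatorname{argmax}\{\|v-P_{W_{k-1}}v\|: v\in V_n,\ \|v\|=1\}$, then choose $\omega_k\in\mathcal D$ with $|\langle v_k-P_{W_{k-1}}v_k,\omega_k\rangle|\ge\kappa\sup_{\omega\in\mathcal D}|\langle v_k-P_{W_{k-1}}v_k,\omega\rangle|$, and set $W_k=\operatorname{span}\{\omega_1,\dots,\omega_k\}$ ($P_X$ is the orthogonal projection onto $X$). The residual is $r_m=\sum_{i=1}^n\|\phi_i-P_{W_m}\phi_i\|^2$. *)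

theory Defs
  imports "HOL-Analysis.Analysis"
begin

definition orth_proj :: "'a::real_inner set \<Rightarrow> 'a \<Rightarrow> 'a" where
  "orth_proj X v = (THE y. y \<in> X \<and> (\<forall>w\<in>X. inner (v - y) w = 0))"

definition dictionary :: "'a::real_normed_vector set \<Rightarrow> bool" where
  "dictionary D \<longleftrightarrow> (\<forall>\<omega>\<in>D. norm \<omega> = 1) \<and> closure (span D) = UNIV"

definition omp_space :: "(nat \<Rightarrow> 'a::real_vector) \<Rightarrow> nat \<Rightarrow> 'a set" where
  "omp_space \<omega> m = span (\<omega> ` {1..m})"

text \<open>Worst case OMP with parameter kappa, for V_n = span of phi 0..phi (n-1):
  v k and omega k are the choices made at step k >= 1.\<close>
definition worst_case_omp ::
  "'a::real_inner set \<Rightarrow> 'a set \<Rightarrow> real \<Rightarrow> (nat \<Rightarrow> 'a) \<Rightarrow> (nat \<Rightarrow> 'a) \<Rightarrow> bool" where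
  "worst_case_omp D Vn \<kappa> v \<omega> \<longleftrightarrow>
    (\<forall>k\<ge>1.
       v k \<in> Vn \<and> norm (v k) = 1 \<and>
       (\<forall>u\<in>Vn. norm u = 1 \<longrightarrow>
          norm (u - orth_proj (omp_space \<omega> (k - 1)) u)
            \<le> norm (v k - orth_proj (omp_space \<omega> (k - 1)) (v k))) \<and>
       \<omega> k \<in> D \<and>
       \<bar>inner (v k - orth_proj (omp_space \<omega> (k - 1)) (v k)) (\<omega> k)\<bar>
         \<ge> \<kappa> * (SUP \<eta>\<in>D. \<bar>inner (v k - orth_proj (omp_space \<omega> (k - 1)) (v k)) \<eta>\<bar>))"

definition omp_residual :: "nat \<Rightarrow> (nat \<Rightarrow> 'a::real_inner) \<Rightarrow> (nat \<Rightarrow> 'a) \<Rightarrow> nat \<Rightarrow> real" where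
  "omp_residual n \<phi> \<omega> m = (\<Sum>i<n. (norm (\<phi> i - orth_proj (omp_space \<omega> m) (\<phi> i)))\<^sup>2)"

end

theory Submission imports Defs begin

lemma proj_exists:
  fixes S :: "'a::real_inner set"
  assumes "finite S"
  shows "\<forall>v. \<exists>y. y \<in> span S \<and> (\<forall>w\<in>span S. inner (v - y) w = 0)"
  using assms
proof (induction S)
  case empty
  then show ?case by auto
next
  case (insert a S)
  obtain pa where pa: "pa \<in> span S" "\<forall>w\<in>span S. inner (a - pa) w = 0"
    using insert.IH by blast
  define u where "u = a - pa"
  show ?case
  proof (cases "u = 0")
    case True
    then have "a \<in> span S" using pa u_def by simp
    then show ?thesis using insert.IH span_redundant by metis
  next
    case False
    show ?thesis
    proof
      fix v
      obtain pv where pv: "pv \<in> span S" "\<forall>w\<in>span S. inner (v - pv) w = 0"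
        using insert.IH by blast
      define y where "y = pv + (inner v u / inner u u) *\<^sub>R u"
      have sub: "span S \<subseteq> span (insert a S)" by (simp add: span_mono subset_insertI)
      have uin: "u \<in> span (insert a S)" unfolding u_def
        using pa(1) sub by (meson insertI1 span_base span_diff subsetD)
      have yin: "y \<in> span (insert a S)" unfolding y_def
        using pv(1) sub uin by (meson span_add span_scale subsetD)
      have uu: "inner u u \<noteq> 0" using False by simp
      have pvu: "inner pv u = 0" using pa(2) pv(1) u_def by (simp add: inner_commute)
      have orth: "inner (v - y) w = 0" if "w \<in> insert a S" for w
      proof (cases "w = a")
        case True
        have "a = u + pa" using u_def by simp
        then have "inner (v - y) a = inner (v - y) u + inner (v - y) pa"
          by (simp add: inner_add_right)
        moreover have "inner (v - y) pa = 0"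
        proof -
          have "inner (v - y) pa = inner (v - pv) pa - (inner v u / inner u u) * inner u pa"
            unfolding y_def by (simp add: inner_diff_left inner_add_left algebra_simps)
          moreover have "inner (v - pv) pa = 0" using pv(2) pa(1) by blast
          moreover have "inner u pa = 0" using pa(2) pa(1) u_def by blast
          ultimately show ?thesis by simp
        qed
        moreover have "inner (v - y) u = 0"
          unfolding y_def using uu pvu
          by (simp add: inner_diff_left inner_add_left)
        ultimately show ?thesis using True by simp
      next
        case f: False
        then have wS: "w \<in> span S" using that span_base by auto
        have "inner u w = 0" using pa(2) wS u_def by simp
        then show ?thesis using pv(2) wS unfolding y_def
          by (simp add: inner_diff_left inner_add_left algebra_simps)
      qed
      have "\<forall>w\<in>span (insert a S). inner (v - y) w = 0"
        using orth orthogonal_to_span unfolding orthogonal_def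
        by (metis inner_commute)
      then show "\<exists>y. y \<in> span (insert a S) \<and> (\<forall>w\<in>span (insert a S). inner (v - y) w = 0)"
        using yin by blast
    qed
  qed
qed

lemma proj_unique:
  fixes X :: "'a::real_inner set"
  assumes "subspace X" "y \<in> X" "\<forall>w\<in>X. inner (v - y) w = 0"
    "y' \<in> X" "\<forall>w\<in>X. inner (v - y') w = 0"
  shows "y = y'"
proof -
  have "y - y' \<in> X" using assms by (simp add: subspace_diff)
  then have "inner (v - y') (y - y') - inner (v - y) (y - y') = 0" using assms by simp
  then have "inner (y - y') (y - y') = 0" by (simp add: inner_diff_left inner_diff_right algebra_simps)
  then show ?thesis by simp
qed

lemma proj_char:
  fixes S :: "'a::real_inner set"
  assumes "finite S"
  shows "orth_proj (span S) v \<in> span S \<and> (\<forall>w\<in>span S. inner (v - orth_proj (span S) v) w = 0)"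
proof -
  obtain y where y: "y \<in> span S" "\<forall>w\<in>span S. inner (v - y) w = 0"
    using proj_exists[OF assms] by blast
  have "\<exists>!y. y \<in> span S \<and> (\<forall>w\<in>span S. inner (v - y) w = 0)"
  proof (rule ex1I[of _ y])
    show "y \<in> span S \<and> (\<forall>w\<in>span S. inner (v - y) w = 0)" using y by blast
    fix y' assume "y' \<in> span S \<and> (\<forall>w\<in>span S. inner (v - y') w = 0)"
    then show "y' = y" using y proj_unique[OF subspace_span, where y=y' and y'=y and v=v] by blast
  qed
  then show ?thesis unfolding orth_proj_def by (rule theI')
qed

lemma proj_in: "finite S \<Longrightarrow> orth_proj (span S) v \<in> span S"
  using proj_char by blast

lemma proj_orth: "finite S \<Longrightarrow> w \<in> span S \<Longrightarrow> inner (v - orth_proj (span S) v) w = 0"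
  using proj_char by blast

lemma proj_pyth:
  assumes "finite S" "x \<in> span S"
  shows "(norm (v - x))\<^sup>2 = (norm (v - orth_proj (span S) v))\<^sup>2 + (norm (orth_proj (span S) v - x))\<^sup>2"
proof -
  let ?p = "orth_proj (span S) v"
  have "?p - x \<in> span S" using assms proj_in span_diff by blast
  then have o: "inner (v - ?p) (?p - x) = 0" using proj_orth assms by blast
  have "v - x = (v - ?p) + (?p - x)" by simp
  then show ?thesis using norm_add_Pythagorean[of "v - ?p" "?p - x"] o by (simp add: orthogonal_def)
qed

lemma proj_best:
  assumes "finite S" "x \<in> span S"
  shows "norm (v - orth_proj (span S) v) \<le> norm (v - x)"
proof (rule power2_le_imp_le)
  show "(norm (v - orth_proj (span S) v))\<^sup>2 \<le> (norm (v - x))\<^sup>2"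
    using proj_pyth[OF assms, of v] by simp
qed simp

lemma proj_norm_le:
  assumes "finite S"
  shows "norm (v - orth_proj (span S) v) \<le> norm v"
  using proj_best[OF assms span_zero, of v] by simp

lemma proj_selfadj:
  assumes "finite S"
  shows "inner (v - orth_proj (span S) v) w = inner v (w - orth_proj (span S) w)"
proof -
  let ?P = "orth_proj (span S)"
  have a: "inner (v - ?P v) (?P w) = 0" using assms proj_in proj_orth by blast
  have b: "inner (w - ?P w) (?P v) = 0" using assms proj_in proj_orth by blast
  have "inner (v - ?P v) w = inner (v - ?P v) (w - ?P w)"
    using a by (simp add: inner_diff_right)
  also have "\<dots> = inner v (w - ?P w)"
    using b by (simp add: inner_diff_left inner_commute)
  finally show ?thesis .
qed

lemma proj_step:
  fixes S :: "'a::real_inner set"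
  assumes "finite S" "norm a \<le> 1"
  shows "(norm (v - orth_proj (span (insert a S)) v))\<^sup>2
    \<le> (norm (v - orth_proj (span S) v))\<^sup>2 - (inner v (a - orth_proj (span S) a))\<^sup>2"
proof -
  let ?P = "orth_proj (span S)" and ?Q = "orth_proj (span (insert a S))"
  define u where "u = a - ?P a"
  define g where "g = v - ?P v"
  have fin: "finite (insert a S)" using assms by simp
  have sub: "span S \<subseteq> span (insert a S)" by (simp add: span_mono subset_insertI)
  have uin: "u \<in> span (insert a S)" unfolding u_def
    using proj_in[OF assms(1)] sub by (meson insertI1 span_base span_diff subsetD)
  have gu: "inner g u = inner v u"
    unfolding g_def u_def using proj_selfadj[OF assms(1), of v a] proj_orth[OF assms(1)] proj_in[OF assms(1)]
    by (simp add: inner_diff_right)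
  have un: "norm u \<le> 1" unfolding u_def using proj_norm_le[OF assms(1), of a] assms(2) by simp
  show ?thesis
  proof (cases "u = 0")
    case True
    have "norm (v - ?Q v) \<le> norm (v - ?P v)"
      using proj_best[OF fin] proj_in[OF assms(1)] sub by blast
    then show ?thesis using True u_def by (simp add: power_mono)
  next
    case False
    define c where "c = inner v u / inner u u"
    have uu: "0 < inner u u" using False by simp
    have uu1: "inner u u \<le> 1" using un
      by (metis norm_ge_zero power2_norm_eq_inner power_le_one)
    have zin: "?P v + c *\<^sub>R u \<in> span (insert a S)"
      using proj_in[OF assms(1)] sub uin by (meson span_add span_scale subsetD)
    have "norm (v - ?Q v) \<le> norm (v - (?P v + c *\<^sub>R u))"
      using proj_best[OF fin zin] .
    then have "(norm (v - ?Q v))\<^sup>2 \<le> (norm (g - c *\<^sub>R u))\<^sup>2"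
      unfolding g_def by (simp add: power_mono algebra_simps)
    also have "\<dots> = inner g g - 2 * c * inner g u + c * c * inner u u"
      by (simp add: power2_norm_eq_inner inner_diff_left inner_diff_right inner_commute algebra_simps)
    also have "\<dots> = inner g g - (inner v u)\<^sup>2 / inner u u"
      using gu uu unfolding c_def by (simp add: field_simps power2_eq_square)
    also have "\<dots> \<le> inner g g - (inner v u)\<^sup>2"
    proof -
      have "(inner v u)\<^sup>2 \<le> (inner v u)\<^sup>2 / inner u u"
        using uu uu1 by (simp add: le_divide_eq mult_left_le)
      then show ?thesis by simp
    qed
    finally show ?thesis unfolding g_def u_def by (simp add: power2_norm_eq_inner)
  qed
qed


lemma orthonormal_rep:
  fixes \<phi> :: "nat \<Rightarrow> 'a::real_inner"
  assumes on: "\<forall>i<n. \<forall>j<n. inner (\<phi> i) (\<phi> j) = (if i = j then 1 else 0)"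
    and x: "x \<in> span (\<phi> ` {..<n})"
  shows "inner x u = (\<Sum>i<n. inner (\<phi> i) u * inner x (\<phi> i))"
  using x
proof (induction rule: span_induct_alt)
  case base
  then show ?case by simp
next
  case (step c x y)
  then obtain j where j: "j < n" "x = \<phi> j" by auto
  have "(\<Sum>i<n. inner (\<phi> i) u * inner (\<phi> j) (\<phi> i)) = (\<Sum>i<n. if i = j then inner (\<phi> j) u else 0)"
    using on j(1) by (intro sum.cong) auto
  also have "\<dots> = inner (\<phi> j) u" using j(1) by simp
  finally have e: "(\<Sum>i<n. inner (\<phi> i) u * inner (\<phi> j) (\<phi> i)) = inner (\<phi> j) u" .
  have "(\<Sum>i<n. inner (\<phi> i) u * inner (c *\<^sub>R x + y) (\<phi> i))
     = c * (\<Sum>i<n. inner (\<phi> i) u * inner (\<phi> j) (\<phi> i)) + (\<Sum>i<n. inner (\<phi> i) u * inner y (\<phi> i))"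
    using j by (simp add: inner_add_left sum.distrib sum_distrib_left algebra_simps)
  then show ?case using e step.IH j by (simp add: inner_add_left)
qed

lemma orthonormal_bound:
  fixes \<phi> :: "nat \<Rightarrow> 'a::real_inner"
  assumes on: "\<forall>i<n. \<forall>j<n. inner (\<phi> i) (\<phi> j) = (if i = j then 1 else 0)"
    and x: "x \<in> span (\<phi> ` {..<n})" and nx: "norm x = 1"
  shows "(inner x u)\<^sup>2 \<le> (\<Sum>i<n. (inner (\<phi> i) u)\<^sup>2)"
proof -
  define Q where "Q = (\<Sum>i<n. inner (\<phi> i) u *\<^sub>R \<phi> i)"
  have Qin: "Q \<in> span (\<phi> ` {..<n})" unfolding Q_def
    by (intro span_sum span_scale span_base) auto
  have xQ: "inner x Q = inner x u"
    unfolding Q_def using orthonormal_rep[OF on x, of u] by (simp add: inner_sum_right)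
  have QQ: "inner Q Q = inner Q u"
    unfolding Q_def using orthonormal_rep[OF on Qin, of u] by (simp add: inner_sum_right Q_def)
  have Qu: "inner Q u = (\<Sum>i<n. (inner (\<phi> i) u)\<^sup>2)"
    unfolding Q_def by (simp add: inner_sum_left power2_eq_square)
  have "(inner x Q)\<^sup>2 \<le> inner x x * inner Q Q" by (rule Cauchy_Schwarz_ineq)
  moreover have "inner x x = 1" using nx by (simp add: power2_norm_eq_inner[symmetric])
  ultimately show ?thesis using xQ QQ Qu by simp
qed

lemma dense_weak_zero:
  fixes G :: "nat \<Rightarrow> 'a::real_inner"
  assumes d: "closure (span D) = UNIV"
    and z: "\<forall>\<eta>\<in>D. (\<lambda>k. inner \<eta> (G k)) \<longlonglongrightarrow> 0"
    and b: "\<forall>k. norm (G k) \<le> 1"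
  shows "(\<lambda>k. inner x (G k)) \<longlonglongrightarrow> 0"
proof -
  have sp: "(\<lambda>k. inner y (G k)) \<longlonglongrightarrow> 0" if "y \<in> span D" for y
    using that
  proof (induction rule: span_induct_alt)
    case base
    then show ?case by simp
  next
    case (step c x y)
    have "(\<lambda>k. c * inner x (G k) + inner y (G k)) \<longlonglongrightarrow> c * 0 + 0"
      using z step by (intro tendsto_add tendsto_mult tendsto_const) auto
    then show ?case by (simp add: inner_add_left)
  qed
  show ?thesis
  proof (rule LIMSEQ_I)
    fix e :: real assume e: "0 < e"
    have "x \<in> closure (span D)" using d by simp
    then obtain y where y: "y \<in> span D" "dist y x < e / 2"
      using e closure_approachable[of x "span D"] by (meson half_gt_zero)
    obtain N where N: "\<forall>k\<ge>N. norm (inner y (G k) - 0) < e / 2"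
      using LIMSEQ_D[OF sp[OF y(1)], of "e/2"] e by auto
    have "norm (inner x (G k) - 0) < e" if "k \<ge> N" for k
    proof -
      have "inner x (G k) = inner y (G k) + inner (x - y) (G k)" by (simp add: inner_diff_left)
      moreover have "\<bar>inner (x - y) (G k)\<bar> \<le> norm (x - y) * norm (G k)"
        by (rule Cauchy_Schwarz_ineq2)
      moreover have "norm (x - y) * norm (G k) \<le> norm (x - y)"
        using b by (simp add: mult_left_le)
      moreover have "norm (x - y) < e / 2" using y(2) by (simp add: dist_norm norm_minus_commute)
      moreover have "\<bar>inner y (G k)\<bar> < e / 2" using N that by simp
      ultimately show ?thesis by simp
    qed
    then show "\<exists>N. \<forall>k\<ge>N. norm (inner x (G k) - 0) < e" by blast
  qed
qed


theorem mainTheorem13: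
  fixes D :: "'a::{real_inner, complete_space} set"
    and \<phi> :: "nat \<Rightarrow> 'a" and n :: nat and \<kappa> :: real
    and v \<omega> :: "nat \<Rightarrow> 'a"
  assumes "dictionary D"
    and "\<forall>i<n. \<forall>j<n. inner (\<phi> i) (\<phi> j) = (if i = j then 1 else 0)"
    and "0 < \<kappa>" and "\<kappa> < 1"
    and "worst_case_omp D (span (\<phi> ` {..<n})) \<kappa> v \<omega>"
  shows "omp_residual n \<phi> \<omega> \<longlonglongrightarrow> 0"
proof -
  note on = assms(2)
  define Vn where "Vn = span (\<phi> ` {..<n})"
  define P where "P k = orth_proj (span (\<omega> ` {1..k}))" for k
  define r where "r = omp_residual n \<phi> \<omega>"
  define G where "G k = v (Suc k) - P k (v (Suc k))" for k
  define s where "s k = (SUP \<eta>\<in>D. \<bar>inner (G k) \<eta>\<bar>)" for k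
  have fin: "finite (\<omega> ` {1..k})" for k by simp
  have r_def': "r k = (\<Sum>i<n. (norm (\<phi> i - P k (\<phi> i)))\<^sup>2)" for k
    unfolding r_def P_def omp_residual_def omp_space_def by simp
  have H: "v (Suc k) \<in> Vn \<and> norm (v (Suc k)) = 1 \<and>
       (\<forall>u\<in>Vn. norm u = 1 \<longrightarrow> norm (u - P k u) \<le> norm (G k)) \<and>
       \<omega> (Suc k) \<in> D \<and> \<bar>inner (G k) (\<omega> (Suc k))\<bar> \<ge> \<kappa> * s k" for k
  proof -
    have "Suc k \<ge> 1" by simp
    then show ?thesis
      using assms(5) unfolding worst_case_omp_def omp_space_def Vn_def P_def G_def s_def diff_Suc_1
      by (elim allE[of _ "Suc k"]) (simp only: diff_Suc_1; blast)
  qed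
  have D1: "\<forall>\<eta>\<in>D. norm \<eta> = 1" and dens: "closure (span D) = UNIV"
    using assms(1) unfolding dictionary_def by auto
  have phin: "norm (\<phi> i) = 1" if "i < n" for i
    using on that by (simp add: norm_eq_sqrt_inner)
  have phiV: "\<phi> i \<in> Vn" if "i < n" for i unfolding Vn_def using that by (intro span_base) auto
  have Gnorm: "norm (G k) \<le> 1" for k
    using proj_norm_le[OF fin, of "v (Suc k)"] H[of k] unfolding G_def P_def by simp
  have stepA: "(inner (G k) (\<omega> (Suc k)))\<^sup>2 \<le> r k - r (Suc k)" for k
  proof -
    define a where "a = \<omega> (Suc k)"
    define u where "u = a - P k a"
    have ins: "\<omega> ` {1..Suc k} = insert a (\<omega> ` {1..k})"
      unfolding a_def by (auto simp: atLeastAtMostSuc_conv)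
    have na: "norm a \<le> 1" using D1 H[of k] a_def by simp
    have each: "(norm (\<phi> i - P (Suc k) (\<phi> i)))\<^sup>2 \<le> (norm (\<phi> i - P k (\<phi> i)))\<^sup>2 - (inner (\<phi> i) u)\<^sup>2" for i
      using proj_step[OF fin na, of "\<phi> i"] unfolding P_def u_def ins by simp
    have "r (Suc k) \<le> (\<Sum>i<n. (norm (\<phi> i - P k (\<phi> i)))\<^sup>2 - (inner (\<phi> i) u)\<^sup>2)"
      unfolding r_def' by (rule sum_mono) (rule each)
    also have "\<dots> = r k - (\<Sum>i<n. (inner (\<phi> i) u)\<^sup>2)"
      unfolding r_def' by (simp add: sum_subtractf)
    finally have 1: "(\<Sum>i<n. (inner (\<phi> i) u)\<^sup>2) \<le> r k - r (Suc k)" by simp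
    have "inner (G k) a = inner (v (Suc k)) u"
      unfolding G_def u_def P_def by (rule proj_selfadj[OF fin])
    moreover have "(inner (v (Suc k)) u)\<^sup>2 \<le> (\<Sum>i<n. (inner (\<phi> i) u)\<^sup>2)"
      using orthonormal_bound[OF on, of "v (Suc k)" u] H[of k] unfolding Vn_def by simp
    ultimately show ?thesis using 1 a_def by simp
  qed
  have rnn: "r k \<ge> 0" for k unfolding r_def' by (simp add: sum_nonneg)
  have dec: "decseq r"
  proof (rule decseq_SucI)
    fix k show "r (Suc k) \<le> r k"
      using stepA[of k] zero_le_power2[of "inner (G k) (\<omega> (Suc k))"] by linarith
  qed
  obtain L where L: "r \<longlonglongrightarrow> L" using decseq_convergent[OF dec, of 0] rnn by blast
  have diff0: "(\<lambda>k. r k - r (Suc k)) \<longlonglongrightarrow> 0"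
    using tendsto_diff[OF L LIMSEQ_Suc[OF L]] by simp
  have in0: "(\<lambda>k. (inner (G k) (\<omega> (Suc k)))\<^sup>2) \<longlonglongrightarrow> 0"
  proof -
    have cmp: "\<forall>k. norm ((inner (G k) (\<omega> (Suc k)))\<^sup>2) \<le> r k - r (Suc k)" using stepA by simp
    show ?thesis using Lim_null_comparison[OF always_eventually[OF cmp] diff0] by simp
  qed
  have in0': "(\<lambda>k. \<bar>inner (G k) (\<omega> (Suc k))\<bar>) \<longlonglongrightarrow> 0"
    using tendsto_real_sqrt[OF in0] by simp
  have etaz: "\<forall>\<eta>\<in>D. (\<lambda>k. inner \<eta> (G k)) \<longlonglongrightarrow> 0"
  proof
    fix \<eta> assume e: "\<eta> \<in> D"
    have le: "\<bar>inner \<eta> (G k)\<bar> \<le> \<bar>inner (G k) (\<omega> (Suc k))\<bar> / \<kappa>" for k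
    proof -
      have bdd: "bdd_above ((\<lambda>\<eta>. \<bar>inner (G k) \<eta>\<bar>) ` D)"
      proof (rule bdd_aboveI2)
        fix x assume "x \<in> D"
        then show "\<bar>inner (G k) x\<bar> \<le> norm (G k)"
          using Cauchy_Schwarz_ineq2[of "G k" x] D1 by simp
      qed
      have "\<bar>inner \<eta> (G k)\<bar> \<le> s k"
        unfolding s_def using cSUP_upper[OF e bdd] by (simp add: inner_commute)
      then have "\<kappa> * \<bar>inner \<eta> (G k)\<bar> \<le> \<kappa> * s k"
        using assms(3) by (simp add: mult_left_mono)
      then have "\<kappa> * \<bar>inner \<eta> (G k)\<bar> \<le> \<bar>inner (G k) (\<omega> (Suc k))\<bar>"
        using H[of k] by linarith
      then show ?thesis using assms(3) by (simp add: pos_le_divide_eq mult.commute)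
    qed
    have "(\<lambda>k. \<bar>inner (G k) (\<omega> (Suc k))\<bar> / \<kappa>) \<longlonglongrightarrow> 0 / \<kappa>"
      by (intro tendsto_divide in0' tendsto_const) (use assms(3) in simp)
    then have g0: "(\<lambda>k. \<bar>inner (G k) (\<omega> (Suc k))\<bar> / \<kappa>) \<longlonglongrightarrow> 0" by simp
    have cmp: "\<forall>k. norm (inner \<eta> (G k)) \<le> \<bar>inner (G k) (\<omega> (Suc k))\<bar> / \<kappa>" using le by simp
    show "(\<lambda>k. inner \<eta> (G k)) \<longlonglongrightarrow> 0"
      using Lim_null_comparison[OF always_eventually[OF cmp] g0] by simp
  qed
  have all0: "(\<lambda>k. inner x (G k)) \<longlonglongrightarrow> 0" for x
    by (rule dense_weak_zero[OF dens etaz]) (use Gnorm in simp)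
  have sum0: "(\<lambda>k. \<Sum>i<n. \<bar>inner (\<phi> i) (G k)\<bar>) \<longlonglongrightarrow> 0"
  proof -
    have "(\<lambda>k. \<Sum>i<n. \<bar>inner (\<phi> i) (G k)\<bar>) \<longlonglongrightarrow> (\<Sum>i<n. 0)"
      by (intro tendsto_sum tendsto_rabs_zero all0)
    then show ?thesis by simp
  qed
  have Gsq: "(norm (G k))\<^sup>2 \<le> (\<Sum>i<n. \<bar>inner (\<phi> i) (G k)\<bar>)" for k
  proof -
    let ?v = "v (Suc k)"
    have o: "inner (G k) (P k ?v) = 0"
      unfolding G_def P_def using proj_in[OF fin] proj_orth[OF fin] by blast
    have "(norm (G k))\<^sup>2 = inner (G k) (G k)" by (simp add: power2_norm_eq_inner)
    also have "\<dots> = inner (G k) ?v" using o by (simp add: G_def inner_diff_right)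
    also have "\<dots> = inner ?v (G k)" by (simp add: inner_commute)
    also have "\<dots> = (\<Sum>i<n. inner (\<phi> i) (G k) * inner ?v (\<phi> i))"
      using orthonormal_rep[OF on, of ?v "G k"] H[of k] unfolding Vn_def by simp
    also have "\<dots> \<le> (\<Sum>i<n. \<bar>inner (\<phi> i) (G k)\<bar>)"
    proof (rule sum_mono)
      fix i assume i: "i \<in> {..<n}"
      have "\<bar>inner ?v (\<phi> i)\<bar> \<le> norm ?v * norm (\<phi> i)" by (rule Cauchy_Schwarz_ineq2)
      then have "\<bar>inner ?v (\<phi> i)\<bar> \<le> 1" using H[of k] phin i by simp
      then have "\<bar>inner (\<phi> i) (G k) * inner ?v (\<phi> i)\<bar> \<le> \<bar>inner (\<phi> i) (G k)\<bar>"
        by (simp add: abs_mult mult_left_le)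
      then show "inner (\<phi> i) (G k) * inner ?v (\<phi> i) \<le> \<bar>inner (\<phi> i) (G k)\<bar>" by linarith
    qed
    finally show ?thesis .
  qed
  have rle: "r k \<le> real n * (\<Sum>i<n. \<bar>inner (\<phi> i) (G k)\<bar>)" for k
  proof -
    have "r k \<le> (\<Sum>i<n. (norm (G k))\<^sup>2)"
      unfolding r_def'
    proof (rule sum_mono)
      fix i assume i: "i \<in> {..<n}"
      have "norm (\<phi> i - P k (\<phi> i)) \<le> norm (G k)" using H[of k] phiV phin i by simp
      then show "(norm (\<phi> i - P k (\<phi> i)))\<^sup>2 \<le> (norm (G k))\<^sup>2" by (simp add: power_mono)
    qed
    also have "\<dots> = real n * (norm (G k))\<^sup>2" by simp
    also have "\<dots> \<le> real n * (\<Sum>i<n. \<bar>inner (\<phi> i) (G k)\<bar>)"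
      using Gsq by (simp add: mult_left_mono)
    finally show ?thesis .
  qed
  have "(\<lambda>k. real n * (\<Sum>i<n. \<bar>inner (\<phi> i) (G k)\<bar>)) \<longlonglongrightarrow> real n * 0"
    by (intro tendsto_mult tendsto_const sum0)
  then have g0: "(\<lambda>k. real n * (\<Sum>i<n. \<bar>inner (\<phi> i) (G k)\<bar>)) \<longlonglongrightarrow> 0" by simp
  have cmp: "\<forall>k. norm (r k) \<le> real n * (\<Sum>i<n. \<bar>inner (\<phi> i) (G k)\<bar>)" using rle rnn by simp
  have "r \<longlonglongrightarrow> 0"
    using Lim_null_comparison[OF always_eventually[OF cmp] g0] by simp
  then show ?thesis unfolding r_def .
qed

end
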